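(* Let $d\ge1$. Let $G_A=(V_A,E_A)$ with configuration $\mathbf{p}^A$ and $G_B=(V_B,E_B)$ with configuration $\mathbf{p}^B$ be two universally rigid frameworks in general position in $\mathbb{R}^d$, with $V_C=V_A\cap V_B$ a proper subset of both $V_A$ and $V_B$, $|V_C|\ge d+1$, and $\mathbf{p}^A_i=\mathbf{p}^B_i$ for $i\in V_C$. Let $F$ be the set of edges $\{i,j\}\in E_B\setminus E_A$ with $i,j\in V_C$. Then the edge-reduced framework attachment, i.e. the framework with graph $(V_A\cup V_B,(E_A\cup E_B)\setminus F)$ and configuration $\mathbf{p}$ (where $\mathbf{p}_i=\mathbf{p}^A_i$ for $i\in V_A$, $\mathbf{p}_i=\mathbf{p}^B_i$ for $i\in V_B$), is universally rigid.
   Context: A framework $G(\mathbf{p})$ in $\mathbb{R}^d$ is a finite graph $G=(V,E)$ with points $\mathbf{p}_i\in\mathbb{R}^d$, $i\in V$. It is in general position if any $d+1$ distinct vertices have affinely independent points. $G(\mathbf{p})$ and $G(\mathbf{q})$ are equivalent if they have equal lengths $\|\mathbf{p}_i-\mathbf{p}_j\|=\|\mathbf{q}_i-\mathbf{q}_j\|$ on all edges, and congruent if these equalities hold for all pairs of vertices. $G(\mathbf{p})$ in $\mathbb{R}^d$ is universally rigid if for every $d'\ge d$ every framework $G(\mathbf{q})$ in $\mathbb{R}^{d'}$ equivalent to it is congruent to it. The roles of $G_A$ and $G_B$ are interchangeable: the removed edges are those between shared vertices present in only one (fixed) of the two frameworks. *)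

theory Defs
  imports Main Complex_Main
begin

text \<open>Points of R^n are represented as functions nat => real whose coordinates
  with index >= n vanish; this lets us quantify over all dimensions d' >= d
  and embeds R^d into R^d' by zero padding.\<close>

definition in_Rn :: "nat \<Rightarrow> (nat \<Rightarrow> real) \<Rightarrow> bool" where
  "in_Rn n x \<longleftrightarrow> (\<forall>k\<ge>n. x k = 0)"

definition edist :: "nat \<Rightarrow> (nat \<Rightarrow> real) \<Rightarrow> (nat \<Rightarrow> real) \<Rightarrow> real" where
  "edist n x y = sqrt (\<Sum>k<n. (x k - y k)^2)"

definition graph :: "'v set \<Rightarrow> 'v set set \<Rightarrow> bool" where
  "graph V E \<longleftrightarrow> finite V \<and>
     (\<forall>e\<in>E. \<exists>i j. i \<in> V \<and> j \<in> V \<and> i \<noteq> j \<and> e = {i, j})"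

definition framework :: "nat \<Rightarrow> 'v set \<Rightarrow> 'v set set \<Rightarrow> ('v \<Rightarrow> nat \<Rightarrow> real) \<Rightarrow> bool" where
  "framework d V E p \<longleftrightarrow> graph V E \<and> (\<forall>i\<in>V. in_Rn d (p i))"

definition equivalent :: "nat \<Rightarrow> 'v set set \<Rightarrow> ('v \<Rightarrow> nat \<Rightarrow> real) \<Rightarrow> ('v \<Rightarrow> nat \<Rightarrow> real) \<Rightarrow> bool" where
  "equivalent n E p q \<longleftrightarrow>
     (\<forall>i j. {i, j} \<in> E \<longrightarrow> edist n (p i) (p j) = edist n (q i) (q j))"

definition congruent :: "nat \<Rightarrow> 'v set \<Rightarrow> ('v \<Rightarrow> nat \<Rightarrow> real) \<Rightarrow> ('v \<Rightarrow> nat \<Rightarrow> real) \<Rightarrow> bool" where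
  "congruent n V p q \<longleftrightarrow>
     (\<forall>i\<in>V. \<forall>j\<in>V. edist n (p i) (p j) = edist n (q i) (q j))"

definition universally_rigid :: "nat \<Rightarrow> 'v set \<Rightarrow> 'v set set \<Rightarrow> ('v \<Rightarrow> nat \<Rightarrow> real) \<Rightarrow> bool" where
  "universally_rigid d V E p \<longleftrightarrow>
     (\<forall>d'\<ge>d. \<forall>q. (\<forall>i\<in>V. in_Rn d' (q i)) \<longrightarrow> equivalent d' E p q \<longrightarrow> congruent d' V p q)"

definition aff_indep :: "'v set \<Rightarrow> ('v \<Rightarrow> nat \<Rightarrow> real) \<Rightarrow> bool" where
  "aff_indep S p \<longleftrightarrow>
     (\<forall>c. (\<Sum>i\<in>S. c i) = 0 \<and> (\<forall>k. (\<Sum>i\<in>S. c i * p i k) = 0) \<longrightarrow> (\<forall>i\<in>S. c i = 0))"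

definition general_position :: "nat \<Rightarrow> 'v set \<Rightarrow> ('v \<Rightarrow> nat \<Rightarrow> real) \<Rightarrow> bool" where
  "general_position d V p \<longleftrightarrow> (\<forall>S\<subseteq>V. card S = d + 1 \<longrightarrow> aff_indep S p)"

end

theory Submission imports Defs begin

definition sqd :: "nat \<Rightarrow> (nat\<Rightarrow>real) \<Rightarrow> (nat\<Rightarrow>real) \<Rightarrow> real" where
  "sqd n x y = (\<Sum>k<n. (x k - y k)^2)"

lemma aff_sq:
  fixes w x :: "'a \<Rightarrow> real"
  assumes "finite S" "sum w S = 1"
  shows "((\<Sum>v\<in>S. w v * x v) - y)^2 = (\<Sum>v\<in>S. w v * (x v - y)^2)
           - (\<Sum>u\<in>S. \<Sum>v\<in>S. w u * w v * (x u - x v)^2) / 2"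
proof -
  define z where "z v = x v - y" for v
  have e1: "(\<Sum>v\<in>S. w v * x v) - y = (\<Sum>v\<in>S. w v * z v)"
    using assms(2) by (simp add: z_def right_diff_distrib sum_subtractf flip: sum_distrib_right)
  have e2: "(\<Sum>v\<in>S. w v * z v)^2 = (\<Sum>u\<in>S. \<Sum>v\<in>S. w u * w v * (z u * z v))"
    by (simp add: power2_eq_square sum_product algebra_simps)
  have xz: "x u - x v = z u - z v" for u v by (simp add: z_def)
  have e3: "(\<Sum>u\<in>S. \<Sum>v\<in>S. w u * w v * (z u - z v)^2)
      = (\<Sum>u\<in>S. \<Sum>v\<in>S. w u * w v * z u^2) + (\<Sum>u\<in>S. \<Sum>v\<in>S. w u * w v * z v^2)
        - 2 * (\<Sum>u\<in>S. \<Sum>v\<in>S. w u * w v * (z u * z v))"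
    by (simp add: power2_diff algebra_simps sum.distrib sum_subtractf sum_distrib_left)
  have e4: "(\<Sum>u\<in>S. \<Sum>v\<in>S. w u * w v * z u^2) = (\<Sum>v\<in>S. w v * z v^2)"
    using assms(2) by (simp add: mult.commute mult.left_commute flip: sum_distrib_left sum_distrib_right)
  have e5: "(\<Sum>u\<in>S. \<Sum>v\<in>S. w u * w v * z v^2) = (\<Sum>v\<in>S. w v * z v^2)"
    using assms(2) by (simp add: mult.assoc flip: sum_distrib_left sum_distrib_right)
  have e6: "(\<Sum>v\<in>S. w v * (x v - y)^2) = (\<Sum>v\<in>S. w v * z v^2)" by (simp add: z_def)
  show ?thesis unfolding e1 e2 xz e3 e4 e5 e6 by (simp add: field_simps)
qed

lemma sqd_aff:
  assumes "finite S" "sum w S = 1"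
  shows "sqd n (\<lambda>k. \<Sum>v\<in>S. w v * x v k) y = (\<Sum>v\<in>S. w v * sqd n (x v) y)
           - (\<Sum>u\<in>S. \<Sum>v\<in>S. w u * w v * sqd n (x u) (x v)) / 2"
proof -
  have "sqd n (\<lambda>k. \<Sum>v\<in>S. w v * x v k) y
     = (\<Sum>k<n. (\<Sum>v\<in>S. w v * (x v k - y k)^2)
           - (\<Sum>u\<in>S. \<Sum>v\<in>S. w u * w v * (x u k - x v k)^2) / 2)"
    unfolding sqd_def by (rule sum.cong[OF refl], rule aff_sq[OF assms])
  also have "\<dots> = (\<Sum>v\<in>S. w v * sqd n (x v) y)
           - (\<Sum>u\<in>S. \<Sum>v\<in>S. w u * w v * sqd n (x u) (x v)) / 2"
    unfolding sqd_def sum_subtractf sum_divide_distrib[symmetric] sum_distrib_left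
    by (simp add: sum.swap[of _ "{..<n}"] sum.swap[of _ "{..<n}" S])
  finally show ?thesis .
qed

lemma sqd_self[simp]: "sqd n x x = 0" by (simp add: sqd_def)

lemma transfer:
  assumes S: "finite S" and w: "sum w S = 1" and pi: "\<forall>k. p i k = (\<Sum>v\<in>S. w v * p v k)"
    and SS: "\<forall>u\<in>S. \<forall>v\<in>S. sqd n (q u) (q v) = sqd n (p u) (p v)"
    and Si: "\<forall>v\<in>S. sqd n (q v) (q i) = sqd n (p v) (p i)"
    and Sj: "\<forall>v\<in>S. sqd n (q v) (q j) = sqd n (p v) (p j)"
  shows "sqd n (q i) (q j) = sqd n (p i) (p j)"
proof -
  define cq where "cq = (\<lambda>k. \<Sum>v\<in>S. w v * q v k)"
  have pi': "p i = (\<lambda>k. \<Sum>v\<in>S. w v * p v k)" using pi by auto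
  have "sqd n cq (q i) = (\<Sum>v\<in>S. w v * sqd n (q v) (q i))
           - (\<Sum>u\<in>S. \<Sum>v\<in>S. w u * w v * sqd n (q u) (q v)) / 2"
    unfolding cq_def by (rule sqd_aff[OF S w])
  also have "\<dots> = (\<Sum>v\<in>S. w v * sqd n (p v) (p i))
           - (\<Sum>u\<in>S. \<Sum>v\<in>S. w u * w v * sqd n (p u) (p v)) / 2"
    using SS Si by simp
  also have "\<dots> = sqd n (p i) (p i)"
    by (subst (2) pi', rule sqd_aff[OF S w, symmetric])
  finally have z: "sqd n cq (q i) = 0" by simp
  have co: "cq k = q i k" if "k < n" for k
  proof -
    have "(\<Sum>k<n. (cq k - q i k)^2) = 0" using z by (simp add: sqd_def)
    then have "\<forall>k\<in>{..<n}. (cq k - q i k)^2 = 0"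
      by (subst (asm) sum_nonneg_eq_0_iff) auto
    with that show ?thesis by auto
  qed
  have "sqd n (q i) (q j) = sqd n cq (q j)"
    unfolding sqd_def using co by (intro sum.cong) auto
  also have "\<dots> = (\<Sum>v\<in>S. w v * sqd n (q v) (q j))
           - (\<Sum>u\<in>S. \<Sum>v\<in>S. w u * w v * sqd n (q u) (q v)) / 2"
    unfolding cq_def by (rule sqd_aff[OF S w])
  also have "\<dots> = (\<Sum>v\<in>S. w v * sqd n (p v) (p j))
           - (\<Sum>u\<in>S. \<Sum>v\<in>S. w u * w v * sqd n (p u) (p v)) / 2"
    using SS Sj by simp
  also have "\<dots> = sqd n (p i) (p j)"
    by (subst pi', rule sqd_aff[OF S w, symmetric])
  finally show ?thesis .
qed

lemma homog:
  "finite I \<Longrightarrow> m < card I \<Longrightarrow>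
    \<exists>c. (\<exists>i\<in>I. c i \<noteq> 0) \<and> (\<forall>j<m. (\<Sum>i\<in>I. a j i * c i) = (0::real))"
proof (induction m arbitrary: I a)
  case 0
  then obtain i where "i \<in> I" by (metis card.empty card_ge_0_finite equals0I less_irrefl)
  then show ?case by (intro exI[of _ "\<lambda>_. 1"]) auto
next
  case (Suc m)
  show ?case
  proof (cases "\<forall>i\<in>I. a m i = 0")
    case True
    from Suc.IH[of I a] Suc.prems obtain c where
      c: "\<exists>i\<in>I. c i \<noteq> 0" "\<forall>j<m. (\<Sum>i\<in>I. a j i * c i) = 0" by auto
    show ?thesis
    proof (intro exI[of _ c] conjI allI impI)
      fix j assume "j < Suc m"
      then consider "j < m" | "j = m" by linarith
      then show "(\<Sum>i\<in>I. a j i * c i) = 0" using c True by cases auto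
    qed (use c in auto)
  next
    case False
    then obtain i0 where i0: "i0 \<in> I" "a m i0 \<noteq> 0" by auto
    define I' where "I' = I - {i0}"
    have fI': "finite I'" using Suc.prems by (simp add: I'_def)
    have cI': "m < card I'" using Suc.prems i0 by (simp add: I'_def)
    define b where "b j i = a j i - a j i0 * a m i / a m i0" for j i
    from Suc.IH[OF fI' cI', of b] obtain c' where
      c': "\<exists>i\<in>I'. c' i \<noteq> 0" "\<forall>j<m. (\<Sum>i\<in>I'. b j i * c' i) = 0" by auto
    define s where "s = (\<Sum>i\<in>I'. a m i * c' i)"
    define c where "c = c'(i0 := - s / a m i0)"
    have I: "I = insert i0 I'" "i0 \<notin> I'" using i0 by (auto simp: I'_def)
    have sumc: "(\<Sum>i\<in>I. f i * c i) = f i0 * (- s / a m i0) + (\<Sum>i\<in>I'. f i * c' i)" for f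
    proof -
      have "(\<Sum>i\<in>I'. f i * c i) = (\<Sum>i\<in>I'. f i * c' i)"
        using I(2) by (intro sum.cong) (auto simp: c_def)
      then show ?thesis using I fI' by (simp add: c_def)
    qed
    show ?thesis
    proof (intro exI[of _ c] conjI allI impI)
      show "\<exists>i\<in>I. c i \<noteq> 0" using c' I by (auto simp: c_def)
    next
      fix j assume "j < Suc m"
      then consider "j < m" | "j = m" by linarith
      then show "(\<Sum>i\<in>I. a j i * c i) = 0"
      proof cases
        case 1
        have "(\<Sum>i\<in>I'. b j i * c' i) = (\<Sum>i\<in>I'. a j i * c' i) - a j i0 * s / a m i0"
          unfolding b_def s_def
          by (simp add: algebra_simps sum_subtractf sum_distrib_left sum_divide_distrib)
        then show ?thesis using c'(2) 1 sumc[of "a j"] by simp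
      next
        case 2
        then show ?thesis using sumc[of "a j"] i0 by (simp add: s_def)
      qed
    qed
  qed
qed

lemma aff_dep:
  assumes "finite T" "card T = d + 2" "\<forall>v\<in>T. in_Rn d (p v)"
  shows "\<exists>c. (\<exists>i\<in>T. c i \<noteq> 0) \<and> sum c T = 0 \<and> (\<forall>k. (\<Sum>i\<in>T. c i * p i k) = 0)"
proof -
  define a where "a j v = (if j = 0 then 1 else p v (j - 1))" for j v
  from homog[OF assms(1), of "d+1" a] assms(2) obtain c where
    c: "\<exists>i\<in>T. c i \<noteq> 0" "\<forall>j<d+1. (\<Sum>i\<in>T. a j i * c i) = 0" by auto
  have "sum c T = 0" using c(2)[rule_format, of 0] by (simp add: a_def)
  moreover have "(\<Sum>i\<in>T. c i * p i k) = 0" for k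
  proof (cases "k < d")
    case True
    then show ?thesis using c(2)[rule_format, of "k+1"] by (simp add: a_def mult.commute)
  next
    case False
    then show ?thesis using assms(3) by (simp add: in_Rn_def)
  qed
  ultimately show ?thesis using c(1) by blast
qed

lemma aff_comb:
  assumes S: "finite S" "card S = d + 1" and iS: "i \<notin> S" and ind: "aff_indep S p"
    and R: "\<forall>v\<in>insert i S. in_Rn d (p v)"
  shows "\<exists>w. sum w S = 1 \<and> (\<forall>k. p i k = (\<Sum>v\<in>S. w v * p v k))"
proof -
  have "card (insert i S) = d + 2" using S iS by simp
  from aff_dep[OF _ this R] S obtain c where
    c: "\<exists>j\<in>insert i S. c j \<noteq> 0" "sum c (insert i S) = 0"
       "\<forall>k. (\<Sum>j\<in>insert i S. c j * p j k) = 0" by auto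
  have c2: "c i + sum c S = 0" using c(2) S iS by simp
  have c3: "c i * p i k + (\<Sum>j\<in>S. c j * p j k) = 0" for k using c(3) S iS by simp
  have ci: "c i \<noteq> 0"
  proof
    assume "c i = 0"
    then have "\<forall>j\<in>S. c j = 0" using ind c2 c3 unfolding aff_indep_def by auto
    with \<open>c i = 0\<close> c(1) show False by auto
  qed
  define w where "w j = - c j / c i" for j
  have "sum w S = 1" using c2 ci
    by (simp add: w_def sum_negf flip: sum_divide_distrib) (simp add: field_simps)
  moreover have "p i k = (\<Sum>v\<in>S. w v * p v k)" for k
  proof -
    have "(\<Sum>v\<in>S. w v * p v k) = - (\<Sum>j\<in>S. c j * p j k) / c i"
      by (simp add: w_def sum_negf sum_divide_distrib)
    then have "c i * p i k = c i * (\<Sum>v\<in>S. w v * p v k)" using c3[of k] ci by (simp add: field_simps)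
    then show ?thesis using ci by simp
  qed
  ultimately show ?thesis by blast
qed

lemma edist_sqd: "edist n x y = sqrt (sqd n x y)" by (simp add: edist_def sqd_def)

lemma sqd_nonneg: "sqd n x y \<ge> 0" by (simp add: sqd_def sum_nonneg)

lemma edist_eq_iff: "edist n x y = edist n x' y' \<longleftrightarrow> sqd n x y = sqd n x' y'"
  using sqd_nonneg[of n x y] sqd_nonneg[of n x' y'] by (simp add: edist_sqd)

lemma sqd_comm: "sqd n x y = sqd n y x" by (simp add: sqd_def power2_commute)

lemma graph_mem: "graph V E \<Longrightarrow> {i, j} \<in> E \<Longrightarrow> i \<in> V \<and> j \<in> V"
  unfolding graph_def by (metis doubleton_eq_iff)

lemma cong_sqd: "congruent n V p q \<Longrightarrow> i \<in> V \<Longrightarrow> j \<in> V \<Longrightarrow> sqd n (q i) (q j) = sqd n (p i) (p j)"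
  unfolding congruent_def using edist_eq_iff by metis

theorem theorem5:
  fixes d :: nat and VA VB :: "'v set" and EA EB :: "'v set set"
    and pA pB :: "'v \<Rightarrow> nat \<Rightarrow> real"
  assumes "d \<ge> 1"
    and "framework d VA EA pA" and "framework d VB EB pB"
    and "universally_rigid d VA EA pA" and "universally_rigid d VB EB pB"
    and "general_position d VA pA" and "general_position d VB pB"
    and "VA \<inter> VB \<subset> VA" and "VA \<inter> VB \<subset> VB"
    and "card (VA \<inter> VB) \<ge> d + 1"
    and "\<forall>i\<in>VA \<inter> VB. pA i = pB i"
  shows "universally_rigid d (VA \<union> VB)
           ((EA \<union> EB) - {e \<in> EB - EA. e \<subseteq> VA \<inter> VB})
           (\<lambda>i. if i \<in> VA then pA i else pB i)"
proof -
  define p where "p = (\<lambda>i. if i \<in> VA then pA i else pB i)"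
  define E where "E = (EA \<union> EB) - {e \<in> EB - EA. e \<subseteq> VA \<inter> VB}"
  have pVA: "\<And>i. i \<in> VA \<Longrightarrow> p i = pA i" by (simp add: p_def)
  have pVB: "\<And>i. i \<in> VB \<Longrightarrow> p i = pB i" using assms(11) by (auto simp: p_def)
  have gA: "graph VA EA" and gB: "graph VB EB" and RA: "\<forall>i\<in>VA. in_Rn d (pA i)"
    and RB: "\<forall>i\<in>VB. in_Rn d (pB i)"
    using assms(2,3) by (auto simp: framework_def)
  have finA: "finite VA" using gA by (simp add: graph_def)
  have finC: "finite (VA \<inter> VB)" using finA by simp
  obtain S where S: "S \<subseteq> VA \<inter> VB" "card S = d + 1"
    using obtain_subset_with_card_n[OF assms(10)] by metis
  have finS: "finite S" using S finC finite_subset by blast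
  have indS: "aff_indep S pA" using assms(6) S unfolding general_position_def by auto
  show ?thesis
    unfolding universally_rigid_def p_def[symmetric] E_def[symmetric]
  proof (intro allI impI)
    fix d' q
    assume dd: "d \<le> d'" and Rq: "\<forall>i\<in>VA \<union> VB. in_Rn d' (q i)" and eq: "equivalent d' E p q"
    have eqE: "\<And>i j. {i, j} \<in> E \<Longrightarrow> edist d' (p i) (p j) = edist d' (q i) (q j)"
      using eq by (simp add: equivalent_def)
    have "equivalent d' EA pA q"
      unfolding equivalent_def
    proof (intro allI impI)
      fix i j assume e: "{i, j} \<in> EA"
      then have "{i, j} \<in> E" by (simp add: E_def)
      with eqE graph_mem[OF gA e] pVA show "edist d' (pA i) (pA j) = edist d' (q i) (q j)" by metis
    qed
    then have cA: "congruent d' VA pA q"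
      using assms(4) dd Rq unfolding universally_rigid_def by auto
    have "equivalent d' EB pB q"
      unfolding equivalent_def
    proof (intro allI impI)
      fix i j assume e: "{i, j} \<in> EB"
      have ij: "i \<in> VB" "j \<in> VB" using graph_mem[OF gB e] by auto
      show "edist d' (pB i) (pB j) = edist d' (q i) (q j)"
      proof (cases "{i, j} \<in> E")
        case True
        with eqE ij pVB show ?thesis by metis
      next
        case False
        then have "{i, j} \<subseteq> VA \<inter> VB" using e by (auto simp: E_def)
        then have "i \<in> VA \<inter> VB" "j \<in> VA \<inter> VB" by auto
        moreover have "pA i = pB i" "pA j = pB j" using calculation assms(11) by auto
        ultimately show ?thesis using cA unfolding congruent_def by (metis IntD1)
      qed
    qed
    then have cB: "congruent d' VB pB q"
      using assms(5) dd Rq unfolding universally_rigid_def by auto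
    have sA: "\<And>i j. i \<in> VA \<Longrightarrow> j \<in> VA \<Longrightarrow> sqd d' (q i) (q j) = sqd d' (p i) (p j)"
      using cong_sqd[OF cA] pVA by metis
    have sB: "\<And>i j. i \<in> VB \<Longrightarrow> j \<in> VB \<Longrightarrow> sqd d' (q i) (q j) = sqd d' (p i) (p j)"
      using cong_sqd[OF cB] pVB by metis
    have cross: "sqd d' (q i) (q j) = sqd d' (p i) (p j)" if i: "i \<in> VA" "i \<notin> VB" and j: "j \<in> VB" for i j
    proof -
      have iS: "i \<notin> S" using S i by auto
      have "\<forall>v\<in>insert i S. in_Rn d (pA v)" using RA S i by auto
      from aff_comb[OF finS S(2) iS indS this] obtain w where
        w: "sum w S = 1" "\<forall>k. pA i k = (\<Sum>v\<in>S. w v * pA v k)" by blast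
      have pi: "\<forall>k. p i k = (\<Sum>v\<in>S. w v * p v k)"
      proof
        fix k
        have "(\<Sum>v\<in>S. w v * p v k) = (\<Sum>v\<in>S. w v * pA v k)"
          using S pVA by (intro sum.cong) auto
        then show "p i k = (\<Sum>v\<in>S. w v * p v k)" using w(2) pVA[OF i(1)] by simp
      qed
      show ?thesis
      proof (rule transfer[OF finS w(1) pi])
        show "\<forall>u\<in>S. \<forall>v\<in>S. sqd d' (q u) (q v) = sqd d' (p u) (p v)" using S sA by auto
        show "\<forall>v\<in>S. sqd d' (q v) (q i) = sqd d' (p v) (p i)" using S sA i by auto
        show "\<forall>v\<in>S. sqd d' (q v) (q j) = sqd d' (p v) (p j)" using S sB j by auto
      qed
    qed
    show "congruent d' (VA \<union> VB) p q"
      unfolding congruent_def edist_eq_iff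
    proof (intro ballI)
      fix i j assume i: "i \<in> VA \<union> VB" and j: "j \<in> VA \<union> VB"
      show "sqd d' (p i) (p j) = sqd d' (q i) (q j)"
      proof (cases "i \<in> VA \<and> j \<in> VA")
        case True then show ?thesis using sA by metis
      next
        case F1: False
        show ?thesis
        proof (cases "i \<in> VB \<and> j \<in> VB")
          case True then show ?thesis using sB by metis
        next
          case False
          with F1 i j consider "i \<in> VA" "i \<notin> VB" "j \<in> VB" | "j \<in> VA" "j \<notin> VB" "i \<in> VB"
            by blast
          then show ?thesis
          proof cases
            case 1 then show ?thesis using cross by metis
          next
            case 2 then show ?thesis using cross[of j i] sqd_comm by metis
          qed
        qed
      qed
    qed
  qed
qed

end
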